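(* Let $(X,\mathcal{A},\mu,\tau,C_\tau)$ be a composition dynamical system on the Orlicz–Lorentz space $\mathbb{L}^{\varphi,h}(\mu)$, where in addition $\tau$ is bijective and $\tau^{-1}$ also satisfies $\mu(\tau(A))\le M'\mu(A)$ for all $A\in\mathcal{A}$ and some $M'>0$, so that $C_\tau$ is invertible with $C_\tau^{-1}=C_{\tau^{-1}}$. Then $C_\tau$ is expansive if and only if for every $A\in\mathcal{A}$ with $0<\mu(A)<\infty$, $$\inf_{n\in\mathbb{Z}}\ \varphi^{-1}\!\left(\frac{1}{\int_0^{\mu(\tau^{-n}(A))}h(t)\,dt}\right)=0 .$$
   Context: Let $(X,\mathcal{A},\mu)$ be a measure space. For a measurable $g$, its distribution function is $\mu_g(\lambda)=\mu\{x:|g(x)|>\lambda\}$ and its non-increasing rearrangement is $g^*(t)=\inf\{\lambda>0:\mu_g(\lambda)\le t\}$. An Orlicz function is a convex $\varphi:[0,\infty)\to[0,\infty)$ with $\varphi(0)=0$ and $\varphi(s)\to\infty$ as $s\to\infty$; here $\varphi$ is assumed continuous and strictly increasing, and $\varphi^{-1}$ denotes its inverse. A weight is a locally integrable, non-increasing function $h:[0,\mu(X))\to(0,\infty)$. The Orlicz–Lorentz space is $\mathbb{L}^{\varphi,h}(\mu)=\{g \text{ measurable}: I_{\varphi,h}(\lambda g)<\infty \text{ for some }\lambda>0\}$ with $I_{\varphi,h}(g)=\int_0^{\mu(X)}\varphi(g^*(t))h(t)\,dt$, normed by $\|g\|_{\varphi,h}=\inf\{\lambda>0: I_{\varphi,h}(g/\lambda)\le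 1\}$ (functions equal a.e. identified). For $A\in\mathcal{A}$ with $0<\mu(A)<\infty$ one has $\|\chi_A\|_{\varphi,h}=1/\varphi^{-1}\big(1/\int_0^{\mu(A)}h(t)\,dt\big)$. A composition dynamical system $(X,\mathcal{A},\mu,\tau,C_\tau)$ means: $(X,\mathcal{A},\mu)$ is $\sigma$-finite; $\tau:X\to X$ is injective and bi-measurable; there is $M>0$ with $\mu(\tau^{-1}(A))\le M\mu(A)$ for all $A\in\mathcal{A}$; and $C_\tau g=g\circ\tau$ is the (bounded) composition operator on $\mathbb{L}^{\varphi,h}(\mu)$. For an invertible bounded operator $T$ on a Banach space $Y$ with unit sphere $S_Y$: $T$ is expansive if for every $y\in S_Y$ there is $n\in\mathbb{Z}$ with $\|T^n y\|\ge 2$ (equivalently, $\sup_{n\in\mathbb{Z}}\|T^n y\|=\infty$ for every $y\neq0$). *)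

theory Defs
  imports "HOL-Analysis.Analysis"
begin

definition distf :: "'a measure \<Rightarrow> ('a \<Rightarrow> real) \<Rightarrow> real \<Rightarrow> ennreal" where
  "distf M g l = emeasure M {x \<in> space M. l < \<bar>g x\<bar>}"

text \<open>Non-increasing rearrangement g*(t) = inf {l > 0. mu_g(l) <= t}, with inf of the empty set = infinity.\<close>
definition rearr :: "'a measure \<Rightarrow> ('a \<Rightarrow> real) \<Rightarrow> real \<Rightarrow> ereal" where
  "rearr M g t = Inf {ereal l | l. 0 < l \<and> distf M g l \<le> ennreal t}"

definition phi_ext :: "(real \<Rightarrow> real) \<Rightarrow> ereal \<Rightarrow> ennreal" where
  "phi_ext \<phi> x = (if x = \<infinity> then \<infinity> else ennreal (\<phi> (real_of_ereal x)))"

definition upto_set :: "ennreal \<Rightarrow> real set" where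
  "upto_set a = {t. 0 \<le> t \<and> ennreal t < a}"

definition meas_dom :: "'a measure \<Rightarrow> real set" where
  "meas_dom M = upto_set (emeasure M (space M))"

definition OL_mod :: "(real \<Rightarrow> real) \<Rightarrow> (real \<Rightarrow> real) \<Rightarrow> 'a measure \<Rightarrow> ('a \<Rightarrow> real) \<Rightarrow> ennreal" where
  "OL_mod \<phi> h M g =
     (\<integral>\<^sup>+ t. phi_ext \<phi> (rearr M g t) * ennreal (h t) * indicator (meas_dom M) t \<partial>lborel)"

definition OL_space :: "(real \<Rightarrow> real) \<Rightarrow> (real \<Rightarrow> real) \<Rightarrow> 'a measure \<Rightarrow> ('a \<Rightarrow> real) set" where
  "OL_space \<phi> h M = {g \<in> borel_measurable M. \<exists>l>0. OL_mod \<phi> h M (\<lambda>x. l * g x) < \<infinity>}"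

definition OL_norm :: "(real \<Rightarrow> real) \<Rightarrow> (real \<Rightarrow> real) \<Rightarrow> 'a measure \<Rightarrow> ('a \<Rightarrow> real) \<Rightarrow> real" where
  "OL_norm \<phi> h M g = Inf {l::real. 0 < l \<and> OL_mod \<phi> h M (\<lambda>x. g x / l) \<le> 1}"

definition orlicz_function :: "(real \<Rightarrow> real) \<Rightarrow> bool" where
  "orlicz_function \<phi> \<longleftrightarrow> convex_on {0..} \<phi> \<and> \<phi> 0 = 0 \<and> continuous_on {0..} \<phi>
     \<and> strict_mono_on {0..} \<phi> \<and> filterlim \<phi> at_top at_top"

definition phi_inv :: "(real \<Rightarrow> real) \<Rightarrow> real \<Rightarrow> real" where
  "phi_inv \<phi> y = (THE s. 0 \<le> s \<and> \<phi> s = y)"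

definition weight :: "'a measure \<Rightarrow> (real \<Rightarrow> real) \<Rightarrow> bool" where
  "weight M h \<longleftrightarrow> (\<forall>t\<in>meas_dom M. 0 < h t)
     \<and> (\<forall>s\<in>meas_dom M. \<forall>t\<in>meas_dom M. s \<le> t \<longrightarrow> h t \<le> h s)
     \<and> (\<forall>b\<in>meas_dom M. set_integrable lborel {0..b} h)"

definition hint_upto :: "(real \<Rightarrow> real) \<Rightarrow> ennreal \<Rightarrow> ennreal" where
  "hint_upto h a = (\<integral>\<^sup>+ t. ennreal (h t) * indicator (upto_set a) t \<partial>lborel)"

definition tau_pow :: "'a measure \<Rightarrow> ('a \<Rightarrow> 'a) \<Rightarrow> int \<Rightarrow> 'a \<Rightarrow> 'a" where
  "tau_pow M \<tau> n = (if 0 \<le> n then \<tau> ^^ nat n else (inv_into (space M) \<tau>) ^^ nat (- n))"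

definition comp_dyn_sys :: "(real \<Rightarrow> real) \<Rightarrow> (real \<Rightarrow> real) \<Rightarrow> 'a measure \<Rightarrow> ('a \<Rightarrow> 'a) \<Rightarrow> bool" where
  "comp_dyn_sys \<phi> h M \<tau> \<longleftrightarrow> sigma_finite_measure M
     \<and> \<tau> \<in> M \<rightarrow>\<^sub>M M \<and> inj_on \<tau> (space M) \<and> (\<forall>A\<in>sets M. \<tau> ` A \<in> sets M)
     \<and> (\<exists>c>0. \<forall>A\<in>sets M. emeasure M (\<tau> -` A \<inter> space M) \<le> ennreal c * emeasure M A)
     \<and> (\<forall>g\<in>OL_space \<phi> h M. g \<circ> \<tau> \<in> OL_space \<phi> h M)
     \<and> (\<exists>c. \<forall>g\<in>OL_space \<phi> h M. OL_norm \<phi> h M (g \<circ> \<tau>) \<le> c * OL_norm \<phi> h M g)"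

definition expansive_comp :: "(real \<Rightarrow> real) \<Rightarrow> (real \<Rightarrow> real) \<Rightarrow> 'a measure \<Rightarrow> ('a \<Rightarrow> 'a) \<Rightarrow> bool" where
  "expansive_comp \<phi> h M \<tau> \<longleftrightarrow>
     (\<forall>g\<in>OL_space \<phi> h M. OL_norm \<phi> h M g = 1 \<longrightarrow>
        (\<exists>n::int. OL_norm \<phi> h M (g \<circ> tau_pow M \<tau> n) \<ge> 2))"

end

theory Submission
  imports Defs
begin


lemma orl_facts:
  assumes "orlicz_function \<phi>"
  shows "\<phi> 0 = 0" "\<And>s t. 0 \<le> s \<Longrightarrow> s < t \<Longrightarrow> \<phi> s < \<phi> t"
    "\<And>s t. 0 \<le> s \<Longrightarrow> s \<le> t \<Longrightarrow> \<phi> s \<le> \<phi> t"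
    "\<And>s. 0 < s \<Longrightarrow> 0 < \<phi> s" "\<And>s. 0 \<le> s \<Longrightarrow> 0 \<le> \<phi> s"
proof -
  have sm: "strict_mono_on {0..} \<phi>" and z: "\<phi> 0 = 0"
    using assms unfolding orlicz_function_def by blast+
  show "\<phi> 0 = 0" by (fact z)
  show lt: "\<phi> s < \<phi> t" if "0 \<le> s" "s < t" for s t
    using sm that unfolding strict_mono_on_def by simp
  show le: "\<phi> s \<le> \<phi> t" if "0 \<le> s" "s \<le> t" for s t
  proof (cases "s = t")
    case False then show ?thesis using lt[of s t] that by simp
  qed simp
  show "0 < \<phi> s" if "0 < s" for s using lt[of 0 s] that z by simp
  show "0 \<le> \<phi> s" if "0 \<le> s" for s using le[of 0 s] that z by simp
qed

lemma orl_scale: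
  assumes "orlicz_function \<phi>" "0 \<le> s" "1 \<le> k"
  shows "\<phi> (s / k) \<le> \<phi> s / k"
proof -
  have cv: "convex_on {0..} \<phi>" using assms(1) unfolding orlicz_function_def by auto
  have "\<phi> ((1 - 1/k) *\<^sub>R 0 + (1/k) *\<^sub>R s) \<le> (1 - 1/k) * \<phi> 0 + (1/k) * \<phi> s"
    using assms by (intro convex_onD[OF cv]) auto
  then show ?thesis using orl_facts(1)[OF assms(1)] by (simp add: divide_inverse mult.commute)
qed

lemma phi_inv_ex:
  assumes "orlicz_function \<phi>" "0 \<le> y"
  shows "0 \<le> phi_inv \<phi> y \<and> \<phi> (phi_inv \<phi> y) = y"
proof -
  have ft: "filterlim \<phi> at_top at_top" and ct: "continuous_on {0..} \<phi>"
    using assms(1) unfolding orlicz_function_def by auto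
  from ft have "eventually (\<lambda>x. y \<le> \<phi> x) at_top" by (simp add: filterlim_at_top)
  then obtain b0 where b0: "\<And>x. x \<ge> b0 \<Longrightarrow> y \<le> \<phi> x" by (auto simp: eventually_at_top_linorder)
  define b where "b = max b0 0"
  have "\<exists>x. 0 \<le> x \<and> x \<le> b \<and> \<phi> x = y"
    apply (rule IVT')
    using assms b0 orl_facts(1)[OF assms(1)] by (auto simp: b_def intro: continuous_on_subset[OF ct])
  then obtain x where x: "0 \<le> x" "\<phi> x = y" by auto
  have uniq: "z = x" if "0 \<le> z \<and> \<phi> z = y" for z
  proof (rule ccontr)
    assume "z \<noteq> x"
    then consider "z < x" | "x < z" by linarith
    then show False
    proof cases
      case 1 then have "\<phi> z < \<phi> x" using orl_facts(2)[OF assms(1)] that by blast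
      then show False using x that by simp
    next
      case 2 then have "\<phi> x < \<phi> z" using orl_facts(2)[OF assms(1)] x(1) by blast
      then show False using x that by simp
    qed
  qed
  have "phi_inv \<phi> y = x" unfolding phi_inv_def
  proof (rule the_equality)
    show "0 \<le> x \<and> \<phi> x = y" using x by simp
    fix z assume "0 \<le> z \<and> \<phi> z = y" then show "z = x" by (rule uniq)
  qed
  then show ?thesis using x by simp
qed

lemma phi_le_iff:
  assumes "orlicz_function \<phi>" "0 \<le> y" "0 \<le> s"
  shows "\<phi> s \<le> y \<longleftrightarrow> s \<le> phi_inv \<phi> y"
  using phi_inv_ex[OF assms(1,2)] orl_facts(2,3)[OF assms(1)] assms
  by (metis not_le)

lemma phi_inv_pos:
  assumes "orlicz_function \<phi>" "0 < y"
  shows "0 < phi_inv \<phi> y"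
  using phi_inv_ex[OF assms(1)] assms orl_facts(1)[OF assms(1)]
  by (metis less_eq_real_def less_irrefl)



lemma antitone_borel:
  fixes F :: "real \<Rightarrow> 'b::{linorder_topology, second_countable_topology}"
  assumes "\<And>x y. x \<le> y \<Longrightarrow> F y \<le> F x"
  shows "F \<in> borel_measurable borel"
proof (rule borel_measurableI_greater)
  fix y
  have "is_interval {x. y < F x}"
    unfolding is_interval_1
  proof (intro ballI allI impI)
    fix a b x assume a: "a \<in> {x. y < F x}" and b: "b \<in> {x. y < F x}" and x: "a \<le> x \<and> x \<le> b"
    have "F b \<le> F x" using assms x by blast
    then show "x \<in> {x. y < F x}" using b by simp
  qed
  then show "{x \<in> space borel. y < F x} \<in> sets borel"
    using real_interval_borel_measurable by simp
qed

lemma rearr_nonneg: "0 \<le> rearr M f t"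
  unfolding rearr_def by (rule Inf_greatest) auto

lemma rearr_anti:
  assumes "s \<le> t" shows "rearr M f t \<le> rearr M f s"
  unfolding rearr_def
proof (rule Inf_superset_mono)
  have "ennreal s \<le> ennreal t" using assms by (rule ennreal_leI)
  then show "{ereal l |l. 0 < l \<and> distf M f l \<le> ennreal s} \<subseteq> {ereal l |l. 0 < l \<and> distf M f l \<le> ennreal t}"
    by (auto intro: order_trans)
qed

lemma distf_mono:
  assumes "g \<in> borel_measurable M" "\<And>x. x \<in> space M \<Longrightarrow> \<bar>f x\<bar> \<le> \<bar>g x\<bar>"
  shows "distf M f l \<le> distf M g l"
  unfolding distf_def
proof (rule emeasure_mono)
  show "{x \<in> space M. l < \<bar>f x\<bar>} \<subseteq> {x \<in> space M. l < \<bar>g x\<bar>}"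
    using assms(2) by (auto intro: less_le_trans)
  show "{x \<in> space M. l < \<bar>g x\<bar>} \<in> sets M" using assms(1) by measurable
qed

lemma rearr_cmp:
  assumes "\<And>l. distf M f l \<le> ennreal C * distf M g l" "1 \<le> C"
  shows "rearr M f t \<le> rearr M g (t / C)"
  unfolding rearr_def
proof (rule Inf_superset_mono, safe)
  fix l assume l: "0 < l" "distf M g l \<le> ennreal (t / C)"
  have "distf M f l \<le> ennreal t"
  proof (cases "0 \<le> t")
    case True
    have "distf M f l \<le> ennreal C * ennreal (t / C)"
      using assms(1)[of l] l(2) by (meson mult_left_mono order_trans zero_le)
    also have "\<dots> = ennreal (C * (t / C))" using True assms(2) by (intro ennreal_mult[symmetric]) auto
    also have "\<dots> = ennreal t" using assms(2) by simp
    finally show ?thesis .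
  next
    case False
    then have "t / C \<le> 0" using assms(2) by (simp add: divide_nonpos_pos)
    then have "ennreal (t / C) = 0" by (simp add: ennreal_eq_0_iff)
    then have "distf M g l = 0" using l(2) by simp
    then show ?thesis using assms(1)[of l] by simp
  qed
  then show "\<exists>la. ereal l = ereal la \<and> 0 < la \<and> distf M f la \<le> ennreal t" using l by blast
qed

lemma rearr_mono:
  assumes "g \<in> borel_measurable M" "\<And>x. x \<in> space M \<Longrightarrow> \<bar>f x\<bar> \<le> \<bar>g x\<bar>"
  shows "rearr M f t \<le> rearr M g t"
  using rearr_cmp[of M f 1 g t] distf_mono[OF assms] by simp

lemma rearr_scale:
  assumes "0 < k"
  shows "ereal k * rearr M (\<lambda>x. f x / k) t \<le> rearr M f t"
  unfolding rearr_def[of M f]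
proof (rule Inf_greatest, safe)
  fix l assume l: "0 < l" "distf M f l \<le> ennreal t"
  have "distf M (\<lambda>x. f x / k) (l / k) = distf M f l"
    unfolding distf_def using assms by (simp add: abs_divide divide_less_cancel)
  then have "rearr M (\<lambda>x. f x / k) t \<le> ereal (l / k)"
    unfolding rearr_def using l assms by (intro Inf_lower) auto
  then have "ereal k * rearr M (\<lambda>x. f x / k) t \<le> ereal k * ereal (l / k)"
    using assms by (intro ereal_mult_left_mono) auto
  also have "\<dots> = ereal l" using assms by simp
  finally show "ereal k * rearr M (\<lambda>x. f x / k) t \<le> ereal l" .
qed

lemma phi_ext_mono:
  assumes "orlicz_function \<phi>" "0 \<le> x" "x \<le> y"
  shows "phi_ext \<phi> x \<le> phi_ext \<phi> y"
proof (cases "y = \<infinity>")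
  case True then show ?thesis by (simp add: phi_ext_def)
next
  case False
  then have "x \<noteq> \<infinity>" using assms by auto
  moreover have "real_of_ereal x \<le> real_of_ereal y" "0 \<le> real_of_ereal x"
    using assms False by (auto intro: real_of_ereal_positive_mono real_of_ereal_pos)
  ultimately show ?thesis using False orl_facts(3)[OF assms(1)]
    by (simp add: phi_ext_def ennreal_leI)
qed

lemma phi_ext_scale:
  assumes "orlicz_function \<phi>" "1 \<le> k"
  shows "phi_ext \<phi> (rearr M (\<lambda>x. f x / k) t) \<le> phi_ext \<phi> (rearr M f t) / ennreal k"
proof (cases "rearr M f t = \<infinity>")
  case True then show ?thesis by (simp add: phi_ext_def ennreal_top_divide)
next
  case False
  have k: "0 < k" using assms by simp
  obtain r where r: "rearr M f t = ereal r" "0 \<le> r"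
    using False rearr_nonneg[of M f t] by (cases "rearr M f t") auto
  define a where "a = rearr M (\<lambda>x. f x / k) t"
  have a0: "0 \<le> a" unfolding a_def by (rule rearr_nonneg)
  have ak: "ereal k * a \<le> ereal r" using rearr_scale[OF k, of M f t] r unfolding a_def by simp
  obtain a' where a': "a = ereal a'" "0 \<le> a'"
    using a0 ak k by (cases a) auto
  have "k * a' \<le> r" using ak a' by simp
  then have "a' \<le> r / k" using k by (simp add: field_simps)
  then have "\<phi> a' \<le> \<phi> (r / k)" using orl_facts(3)[OF assms(1)] a' by blast
  also have "\<dots> \<le> \<phi> r / k" using orl_scale[OF assms(1) r(2) assms(2)] .
  finally have "ennreal (\<phi> a') \<le> ennreal (\<phi> r / k)" by (rule ennreal_leI)
  also have "\<dots> = ennreal (\<phi> r) / ennreal k"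
    using divide_ennreal[of "\<phi> r" k] orl_facts(5)[OF assms(1) r(2)] k by simp
  finally show ?thesis using a' r unfolding a_def[symmetric] by (simp add: phi_ext_def)
qed

lemma phi_rearr_borel:
  assumes "orlicz_function \<phi>"
  shows "(\<lambda>t. phi_ext \<phi> (rearr M f t)) \<in> borel_measurable borel"
  by (rule antitone_borel) (intro phi_ext_mono[OF assms] rearr_nonneg rearr_anti)



lemma upto_set_down: "t \<in> upto_set a \<Longrightarrow> 0 \<le> s \<Longrightarrow> s \<le> t \<Longrightarrow> s \<in> upto_set a"
  unfolding upto_set_def
  by (metis (mono_tags, lifting) ennreal_leI mem_Collect_eq order_le_less_trans)

lemma upto_set_interval: "is_interval (upto_set a)"
  unfolding is_interval_1
proof (intro ballI allI impI)
  fix x z y assume "x \<in> upto_set a" "z \<in> upto_set a" "x \<le> y \<and> y \<le> z"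
  moreover have "0 \<le> x" using \<open>x \<in> upto_set a\<close> unfolding upto_set_def by simp
  ultimately show "y \<in> upto_set a" using upto_set_down[of z a y] by simp
qed

lemma upto_set_borel: "upto_set a \<in> sets borel"
  by (rule real_interval_borel_measurable[OF upto_set_interval])

lemma upto_set_sub: "a \<le> b \<Longrightarrow> upto_set a \<subseteq> upto_set b"
  unfolding upto_set_def by auto


lemma weightD:
  assumes "weight M h"
  shows "\<And>t. t \<in> meas_dom M \<Longrightarrow> 0 < h t"
    "\<And>s t. s \<in> meas_dom M \<Longrightarrow> t \<in> meas_dom M \<Longrightarrow> s \<le> t \<Longrightarrow> h t \<le> h s"
  using assms unfolding weight_def by blast+

lemma hw_borel:
  assumes w: "weight M h" and a: "a \<le> emeasure M (space M)"
  shows "(\<lambda>t. ennreal (h t) * indicator (upto_set a) t) \<in> borel_measurable borel"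
proof (cases "upto_set a = {}")
  case True then show ?thesis by simp
next
  case False
  define U where "U = upto_set a"
  have sub: "U \<subseteq> meas_dom M" unfolding U_def meas_dom_def using a by (rule upto_set_sub)
  obtain t0 where "t0 \<in> U" using False U_def by auto
  then have U0: "0 \<in> U" using upto_set_down[of t0 a 0] unfolding U_def upto_set_def by auto
  define k where "k t = (if t \<in> U then h t else if t < 0 then h 0 else 0)" for t
  have kanti: "k y \<le> k x" if "x \<le> y" for x y
  proof (cases "y \<in> U")
    case True
    show ?thesis
    proof (cases "x \<in> U")
      case True
      then show ?thesis using \<open>y \<in> U\<close> weightD(2)[OF w, of x y] sub that unfolding k_def by auto
    next
      case False
      have "x < 0" using False upto_set_down[of y a x] True that unfolding U_def by force
      moreover have "0 \<le> y" using True unfolding U_def upto_set_def by simp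
      ultimately show ?thesis using True False weightD(2)[OF w, of 0 y] sub U0 unfolding k_def by auto
    qed
  next
    case False
    show ?thesis
    proof (cases "y < 0")
      case True
      then have "x \<notin> U" "x < 0" using that unfolding U_def upto_set_def by auto
      then show ?thesis using True False unfolding k_def by simp
    next
      case False'': False
      have "0 \<le> k x" using weightD(1)[OF w] sub U0 unfolding k_def by (auto intro: less_imp_le)
      then show ?thesis using False False'' unfolding k_def by simp
    qed
  qed
  have kb: "k \<in> borel_measurable borel" by (rule antitone_borel) (rule kanti)
  have Ub: "U \<in> sets borel" unfolding U_def by (rule upto_set_borel)
  have "(\<lambda>t. ennreal (k t) * indicator U t) \<in> borel_measurable borel"
    using kb Ub by measurable
  moreover have "(\<lambda>t. ennreal (h t) * indicator (upto_set a) t) = (\<lambda>t. ennreal (k t) * indicator U t)"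
    by (rule ext) (simp add: k_def U_def indicator_def)
  ultimately show ?thesis by simp
qed

lemma modF_borel:
  assumes "orlicz_function \<phi>" "weight M h"
  shows "(\<lambda>t. phi_ext \<phi> (rearr M f t) * ennreal (h t) * indicator (meas_dom M) t) \<in> borel_measurable borel"
proof -
  have "(\<lambda>t. ennreal (h t) * indicator (meas_dom M) t) \<in> borel_measurable borel"
    unfolding meas_dom_def by (rule hw_borel[OF assms(2)]) simp
  moreover have "(\<lambda>t. phi_ext \<phi> (rearr M f t)) \<in> borel_measurable borel"
    by (rule phi_rearr_borel[OF assms(1)])
  ultimately have "(\<lambda>t. phi_ext \<phi> (rearr M f t) * (ennreal (h t) * indicator (meas_dom M) t)) \<in> borel_measurable borel"
    by measurable
  then show ?thesis by (simp add: mult.assoc)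
qed

lemma rearr_ind:
  assumes "B \<in> sets M" "0 < c"
  shows "rearr M (\<lambda>x. c * indicator B x) t = (if ennreal t < emeasure M B then ereal c else 0)"
proof -
  have Bs: "B \<subseteq> space M" using assms(1) sets.sets_into_space by blast
  have d: "distf M (\<lambda>x. c * indicator B x) l = (if l < c then emeasure M B else 0)" if "0 < l" for l
  proof -
    have "{x \<in> space M. l < \<bar>c * indicator B x\<bar>} = (if l < c then B else {})"
      using Bs that assms(2) by (auto simp: indicator_def)
    then show ?thesis unfolding distf_def by simp
  qed
  show ?thesis
  proof (cases "ennreal t < emeasure M B")
    case True
    have "{ereal l |l. 0 < l \<and> distf M (\<lambda>x. c * indicator B x) l \<le> ennreal t} = ereal ` {c..}"
    proof (intro equalityI subsetI)
      fix y assume "y \<in> {ereal l |l. 0 < l \<and> distf M (\<lambda>x. c * indicator B x) l \<le> ennreal t}"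
      then obtain l where l: "y = ereal l" "0 < l" "distf M (\<lambda>x. c * indicator B x) l \<le> ennreal t" by blast
      then have "c \<le> l" using d[of l] True by (auto split: if_splits)
      then show "y \<in> ereal ` {c..}" using l by simp
    next
      fix y assume "y \<in> ereal ` {c..}"
      then obtain l where l: "y = ereal l" "c \<le> l" by auto
      then show "y \<in> {ereal l |l. 0 < l \<and> distf M (\<lambda>x. c * indicator B x) l \<le> ennreal t}"
        using d[of l] assms(2) by auto
    qed
    moreover have "Inf (ereal ` {c..}) = ereal c"
      by (rule antisym) (auto intro: Inf_lower Inf_greatest)
    ultimately show ?thesis using True unfolding rearr_def by simp
  next
    case False
    have "{ereal l |l. 0 < l \<and> distf M (\<lambda>x. c * indicator B x) l \<le> ennreal t} = ereal ` {0<..}"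
    proof (intro equalityI subsetI)
      fix y assume "y \<in> {ereal l |l. 0 < l \<and> distf M (\<lambda>x. c * indicator B x) l \<le> ennreal t}"
      then show "y \<in> ereal ` {0<..}" by auto
    next
      fix y assume "y \<in> ereal ` {0<..}"
      then obtain l where l: "y = ereal l" "0 < l" by auto
      then show "y \<in> {ereal l |l. 0 < l \<and> distf M (\<lambda>x. c * indicator B x) l \<le> ennreal t}"
        using d[of l] False by auto
    qed
    moreover have "Inf (ereal ` {0<..}) = (0::ereal)"
    proof (rule antisym)
      show "Inf (ereal ` {0<..}) \<le> 0"
        unfolding Inf_le_iff
      proof (intro allI impI)
        fix y :: ereal assume "0 < y"
        show "\<exists>a\<in>ereal ` {0<..}. a < y"
        proof (cases y)
          case (real r)
          then show ?thesis using \<open>0 < y\<close> by (intro bexI[of _ "ereal (r/2)"]) auto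
        next
          case PInf then show ?thesis by (intro bexI[of _ "ereal 1"]) auto
        next
          case MInf then show ?thesis using \<open>0 < y\<close> by simp
        qed
      qed
      show "0 \<le> Inf (ereal ` {0<..})" by (rule Inf_greatest) auto
    qed
    ultimately show ?thesis using False unfolding rearr_def by simp
  qed
qed

lemma mod_ind:
  assumes phi: "orlicz_function \<phi>" and w: "weight M h" and B: "B \<in> sets M" and c: "0 < c"
  shows "OL_mod \<phi> h M (\<lambda>x. c * indicator B x) = ennreal (\<phi> c) * hint_upto h (emeasure M B)"
proof -
  have BX: "emeasure M B \<le> emeasure M (space M)" by (rule emeasure_space)
  have pw: "phi_ext \<phi> (rearr M (\<lambda>x. c * indicator B x) t) * ennreal (h t) * indicator (meas_dom M) t
      = ennreal (\<phi> c) * (ennreal (h t) * indicator (upto_set (emeasure M B)) t)" for t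
  proof (cases "t \<in> upto_set (emeasure M B)")
    case True
    then have "t \<in> meas_dom M" using upto_set_sub[OF BX] unfolding meas_dom_def by blast
    moreover have "ennreal t < emeasure M B" using True unfolding upto_set_def by simp
    ultimately show ?thesis using rearr_ind[OF B c] True by (simp add: phi_ext_def)
  next
    case False
    show ?thesis
    proof (cases "0 \<le> t")
      case True
      then have "\<not> ennreal t < emeasure M B" using False unfolding upto_set_def by simp
      then show ?thesis using rearr_ind[OF B c] False orl_facts(1)[OF phi] by (simp add: phi_ext_def)
    next
      case f2: False
      then have "t \<notin> meas_dom M" unfolding meas_dom_def upto_set_def by simp
      then show ?thesis using False by simp
    qed
  qed
  have "OL_mod \<phi> h M (\<lambda>x. c * indicator B x)
     = (\<integral>\<^sup>+ t. ennreal (\<phi> c) * (ennreal (h t) * indicator (upto_set (emeasure M B)) t) \<partial>lborel)"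
    unfolding OL_mod_def pw ..
  also have "\<dots> = ennreal (\<phi> c) * hint_upto h (emeasure M B)"
    unfolding hint_upto_def
    by (rule nn_integral_cmult) (use hw_borel[OF w BX] in simp)
  finally show ?thesis .
qed



lemma upto_set_ennreal: "0 \<le> b \<Longrightarrow> upto_set (ennreal b) = {0..<b}"
  unfolding upto_set_def by (auto simp: ennreal_less_iff)

lemma H_bounds:
  assumes w: "weight M h" and B: "B \<in> sets M" and pos: "0 < emeasure M B" and fin: "emeasure M B < \<infinity>"
  shows "0 < hint_upto h (emeasure M B)" "hint_upto h (emeasure M B) < \<infinity>"
proof -
  define b where "b = enn2real (emeasure M B)"
  have b0: "0 < b" unfolding b_def using pos fin by (simp add: enn2real_positive_iff)
  have Bb: "emeasure M B = ennreal b" unfolding b_def using fin by simp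
  have BX: "emeasure M B \<le> emeasure M (space M)" by (rule emeasure_space)
  have U: "upto_set (emeasure M B) = {0..<b}" using Bb b0 upto_set_ennreal by simp
  have sub: "{0..<b} \<subseteq> meas_dom M" using upto_set_sub[OF BX] U unfolding meas_dom_def by simp
  have "hint_upto h (emeasure M B) \<le> (\<integral>\<^sup>+ t. ennreal (h 0) * indicator {0..<b} t \<partial>lborel)"
    unfolding hint_upto_def U
  proof (rule nn_integral_mono)
    fix t show "ennreal (h t) * indicator {0..<b} t \<le> ennreal (h 0) * indicator {0..<b} t"
    proof (cases "t \<in> {0..<b}")
      case True
      then have "0 \<in> meas_dom M" "t \<in> meas_dom M" using subsetD[OF sub] b0 by auto
      then have "h t \<le> h 0" using weightD(2)[OF w, of 0 t] True by simp
      then show ?thesis using True by (simp add: ennreal_leI)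
    qed simp
  qed
  also have "\<dots> = ennreal (h 0) * ennreal b" by (subst nn_integral_cmult_indicator) (use b0 in auto)
  also have "\<dots> < \<infinity>" by (simp add: ennreal_mult_less_top)
  finally show "hint_upto h (emeasure M B) < \<infinity>" .
  have "b/2 \<in> meas_dom M" using subsetD[OF sub] b0 by auto
  then have hb: "0 < h (b/2)" using weightD(1)[OF w, of "b/2"] by simp
  have "0 < ennreal (h (b/2)) * ennreal (b/2)" using hb b0 by (simp add: ennreal_mult'[symmetric])
  also have "ennreal (h (b/2)) * ennreal (b/2) = (\<integral>\<^sup>+ t. ennreal (h (b/2)) * indicator {0..<b/2} t \<partial>lborel)"
    by (subst nn_integral_cmult_indicator) (use b0 in auto)
  also have "\<dots> \<le> hint_upto h (emeasure M B)"
    unfolding hint_upto_def U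
  proof (rule nn_integral_mono)
    fix t show "ennreal (h (b/2)) * indicator {0..<b/2} t \<le> ennreal (h t) * indicator {0..<b} t"
    proof (cases "t \<in> {0..<b/2}")
      case True
      then have "b/2 \<in> meas_dom M" "t \<in> meas_dom M" using subsetD[OF sub] b0 by auto
      then have "h (b/2) \<le> h t" using weightD(2)[OF w, of t "b/2"] True by simp
      then show ?thesis using True by (simp add: ennreal_leI)
    qed simp
  qed
  finally show "0 < hint_upto h (emeasure M B)" .
qed

lemma norm_ind:
  assumes phi: "orlicz_function \<phi>" and w: "weight M h" and B: "B \<in> sets M"
    and pos: "0 < emeasure M B" and fin: "emeasure M B < \<infinity>" and c: "0 < c"
  shows "OL_norm \<phi> h M (\<lambda>x. c * indicator B x) = c / phi_inv \<phi> (enn2real (1 / hint_upto h (emeasure M B)))"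
    "0 < phi_inv \<phi> (enn2real (1 / hint_upto h (emeasure M B)))"
proof -
  define H where "H = hint_upto h (emeasure M B)"
  define Hr where "Hr = enn2real H"
  have Hp: "0 < H" "H < \<infinity>" using H_bounds[OF w B pos fin] unfolding H_def by auto
  have Hr: "0 < Hr" "H = ennreal Hr" unfolding Hr_def using Hp by (auto simp: enn2real_positive_iff)
  have inv: "enn2real (1 / H) = 1 / Hr"
    using Hr divide_ennreal[of 1 Hr] by simp
  define v where "v = phi_inv \<phi> (1 / Hr)"
  have v: "0 < v" unfolding v_def using Hr by (intro phi_inv_pos[OF phi]) simp
  show "0 < phi_inv \<phi> (enn2real (1 / hint_upto h (emeasure M B)))"
    using v inv unfolding H_def v_def by simp
  have S: "{l. 0 < l \<and> OL_mod \<phi> h M (\<lambda>x. c * indicator B x / l) \<le> 1} = {c / v..}"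
  proof (intro equalityI subsetI)
    fix l assume l: "l \<in> {l. 0 < l \<and> OL_mod \<phi> h M (\<lambda>x. c * indicator B x / l) \<le> 1}"
    then have l0: "0 < l" by simp
    have eq: "(\<lambda>x. c * indicator B x / l) = (\<lambda>x. (c / l) * indicator B x)" by auto
    have "OL_mod \<phi> h M (\<lambda>x. c * indicator B x / l) = ennreal (\<phi> (c / l)) * ennreal Hr"
      unfolding eq using mod_ind[OF phi w B, of "c/l"] c l0 Hr unfolding H_def by simp
    also have "\<dots> = ennreal (\<phi> (c / l) * Hr)" using Hr by (simp add: ennreal_mult'')
    finally have "\<phi> (c / l) * Hr \<le> 1" using l by simp
    then have "\<phi> (c / l) \<le> 1 / Hr" using Hr by (simp add: field_simps)
    then have "c / l \<le> v" unfolding v_def using phi_le_iff[OF phi, of "1/Hr" "c/l"] Hr c l0 by simp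
    then show "l \<in> {c / v..}" using v l0 by (simp add: field_simps)
  next
    fix l assume "l \<in> {c / v..}"
    then have lv: "c / v \<le> l" by simp
    then have l0: "0 < l" using c v by (meson divide_pos_pos less_le_trans)
    have eq: "(\<lambda>x. c * indicator B x / l) = (\<lambda>x. (c / l) * indicator B x)" by auto
    have "c / l \<le> v" using lv v l0 by (simp add: field_simps)
    then have "\<phi> (c / l) \<le> 1 / Hr" unfolding v_def using phi_le_iff[OF phi, of "1/Hr" "c/l"] Hr c l0 by simp
    then have le1: "\<phi> (c / l) * Hr \<le> 1" using Hr by (simp add: field_simps)
    have "OL_mod \<phi> h M (\<lambda>x. c * indicator B x / l) = ennreal (\<phi> (c / l)) * ennreal Hr"
      unfolding eq using mod_ind[OF phi w B, of "c/l"] c l0 Hr unfolding H_def by simp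
    also have "\<dots> = ennreal (\<phi> (c / l) * Hr)" using Hr by (simp add: ennreal_mult'')
    finally show "l \<in> {l. 0 < l \<and> OL_mod \<phi> h M (\<lambda>x. c * indicator B x / l) \<le> 1}"
      using le1 l0 by simp
  qed
  show "OL_norm \<phi> h M (\<lambda>x. c * indicator B x) = c / phi_inv \<phi> (enn2real (1 / hint_upto h (emeasure M B)))"
    unfolding OL_norm_def S using inv unfolding H_def v_def by simp
qed



lemma mod_mono:
  assumes phi: "orlicz_function \<phi>" and "\<And>t. rearr M f t \<le> rearr M g t"
  shows "OL_mod \<phi> h M f \<le> OL_mod \<phi> h M g"
  unfolding OL_mod_def
proof (rule nn_integral_mono)
  fix t
  have "phi_ext \<phi> (rearr M f t) \<le> phi_ext \<phi> (rearr M g t)"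
    by (rule phi_ext_mono[OF phi rearr_nonneg assms(2)])
  then show "phi_ext \<phi> (rearr M f t) * ennreal (h t) * indicator (meas_dom M) t
      \<le> phi_ext \<phi> (rearr M g t) * ennreal (h t) * indicator (meas_dom M) t"
    by (intro mult_right_mono) auto
qed

lemma norm_mono:
  assumes phi: "orlicz_function \<phi>" and g: "g \<in> borel_measurable M"
    and le: "\<And>x. x \<in> space M \<Longrightarrow> \<bar>f x\<bar> \<le> \<bar>g x\<bar>"
    and ne: "\<exists>l>0. OL_mod \<phi> h M (\<lambda>x. g x / l) \<le> 1"
  shows "OL_norm \<phi> h M f \<le> OL_norm \<phi> h M g"
  unfolding OL_norm_def
proof (rule cInf_superset_mono)
  show "{l. 0 < l \<and> OL_mod \<phi> h M (\<lambda>x. g x / l) \<le> 1} \<noteq> {}" using ne by auto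
  show "bdd_below {l::real. 0 < l \<and> OL_mod \<phi> h M (\<lambda>x. f x / l) \<le> 1}"
    by (rule bdd_belowI[of _ 0]) auto
  show "{l. 0 < l \<and> OL_mod \<phi> h M (\<lambda>x. g x / l) \<le> 1} \<subseteq> {l. 0 < l \<and> OL_mod \<phi> h M (\<lambda>x. f x / l) \<le> 1}"
  proof safe
    fix l :: real assume l: "0 < l" "OL_mod \<phi> h M (\<lambda>x. g x / l) \<le> 1"
    have gl: "(\<lambda>x. g x / l) \<in> borel_measurable M" using g by measurable
    have "\<bar>f x / l\<bar> \<le> \<bar>g x / l\<bar>" if "x \<in> space M" for x
      using le[OF that] l(1) by (simp add: abs_divide divide_right_mono)
    then have "OL_mod \<phi> h M (\<lambda>x. f x / l) \<le> OL_mod \<phi> h M (\<lambda>x. g x / l)"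
      by (intro mod_mono[OF phi] rearr_mono[OF gl])
    then show "OL_mod \<phi> h M (\<lambda>x. f x / l) \<le> 1" using l(2) by simp
  qed
qed

lemma distf_div: "0 < m \<Longrightarrow> distf M (\<lambda>x. f x / m) l = distf M f (l * m)"
  unfolding distf_def by (simp add: abs_divide pos_less_divide_eq)

lemma distf_congr: "(\<And>x. x \<in> space M \<Longrightarrow> f x = g x) \<Longrightarrow> distf M f = distf M g"
  unfolding distf_def by (intro ext arg_cong[where f="emeasure M"]) auto

lemma norm_congr:
  assumes "\<And>x. x \<in> space M \<Longrightarrow> f x = g x"
  shows "OL_norm \<phi> h M f = OL_norm \<phi> h M g"
proof -
  have "distf M (\<lambda>x. f x / l) = distf M (\<lambda>x. g x / l)" for l
    by (rule distf_congr) (simp add: assms)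
  then have "rearr M (\<lambda>x. f x / l) = rearr M (\<lambda>x. g x / l)" for l
    unfolding rearr_def by simp
  then show ?thesis unfolding OL_norm_def OL_mod_def by simp
qed

lemma S_nonempty:
  assumes phi: "orlicz_function \<phi>" and w: "weight M h"
    and C: "1 \<le> C" "\<And>l. distf M f l \<le> ennreal C * distf M g l"
    and l0: "0 < l0" "OL_mod \<phi> h M (\<lambda>x. l0 * g x) < \<infinity>"
  shows "\<exists>l>0. OL_mod \<phi> h M (\<lambda>x. f x / l) \<le> 1"
proof -
  define K where "K = OL_mod \<phi> h M (\<lambda>x. l0 * g x)"
  define Kr where "Kr = enn2real K"
  have K: "K = ennreal Kr" "0 \<le> Kr" unfolding Kr_def K_def using l0 by auto
  define k where "k = max 1 (C * Kr)"
  define m where "m = k / l0"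
  have k1: "1 \<le> k" unfolding k_def by simp
  have m0: "0 < m" unfolding m_def using k1 l0 by simp
  have km: "k = l0 * m" unfolding m_def using l0 by simp
  define F where "F s = phi_ext \<phi> (rearr M (\<lambda>x. g x / m) s) * ennreal (h s) * indicator (meas_dom M) s" for s
  have Fb: "F \<in> borel_measurable borel" unfolding F_def by (rule modF_borel[OF phi w])
  have dcmp: "distf M (\<lambda>x. f x / m) l \<le> ennreal C * distf M (\<lambda>x. g x / m) l" for l
    using C(2)[of "l * m"] m0 distf_div[OF m0, of M f l] distf_div[OF m0, of M g l] by simp
  have pw: "phi_ext \<phi> (rearr M (\<lambda>x. f x / m) t) * ennreal (h t) * indicator (meas_dom M) t \<le> F (t / C)" for t
  proof (cases "t \<in> meas_dom M")
    case True
    have t0: "0 \<le> t" using True unfolding meas_dom_def upto_set_def by simp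
    have tCt: "t / C \<le> t / 1" using divide_left_mono[of 1 C t] t0 C(1) by simp
    have tC0: "0 \<le> t / C" using t0 C(1) by simp
    have tC: "t / C \<in> meas_dom M" 
      using upto_set_down[of t "emeasure M (space M)" "t / C"] True tC0 tCt unfolding meas_dom_def by simp
    have "phi_ext \<phi> (rearr M (\<lambda>x. f x / m) t) \<le> phi_ext \<phi> (rearr M (\<lambda>x. g x / m) (t / C))"
      by (intro phi_ext_mono[OF phi rearr_nonneg] rearr_cmp[OF dcmp C(1)])
    moreover have "h t \<le> h (t / C)"
      using weightD(2)[OF w tC True] tCt by simp
    then have "ennreal (h t) \<le> ennreal (h (t / C))" by (rule ennreal_leI)
    ultimately have "phi_ext \<phi> (rearr M (\<lambda>x. f x / m) t) * ennreal (h t) \<le> phi_ext \<phi> (rearr M (\<lambda>x. g x / m) (t / C)) * ennreal (h (t / C))"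
      by (rule mult_mono) simp_all
    then show ?thesis unfolding F_def using True tC by simp
  next
    case False then show ?thesis by simp
  qed
  have "OL_mod \<phi> h M (\<lambda>x. f x / m) \<le> (\<integral>\<^sup>+ t. F (t / C) \<partial>lborel)"
    unfolding OL_mod_def by (rule nn_integral_mono) (rule pw)
  also have "(\<integral>\<^sup>+ t. F (t / C) \<partial>lborel) = ennreal C * integral\<^sup>N lborel F"
  proof -
    have "integral\<^sup>N lborel F = ennreal \<bar>1 / C\<bar> * (\<integral>\<^sup>+ x. F (0 + (1 / C) * x) \<partial>lborel)"
      by (rule nn_integral_real_affine) (use Fb C(1) in auto)
    also have "\<dots> = ennreal (1 / C) * (\<integral>\<^sup>+ x. F (x / C) \<partial>lborel)" using C(1) by simp
    finally have "ennreal C * integral\<^sup>N lborel F = (ennreal C * ennreal (1 / C)) * (\<integral>\<^sup>+ x. F (x / C) \<partial>lborel)"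
      by (simp add: mult.assoc)
    also have "ennreal C * ennreal (1 / C) = ennreal (C * (1 / C))" using C(1) by (intro ennreal_mult[symmetric]) auto
    also have "C * (1 / C) = 1" using C(1) by simp
    finally show ?thesis by simp
  qed
  also have "integral\<^sup>N lborel F \<le> K / ennreal k"
  proof -
    have "integral\<^sup>N lborel F \<le> (\<integral>\<^sup>+ s. phi_ext \<phi> (rearr M (\<lambda>x. l0 * g x) s) * ennreal (h s) * indicator (meas_dom M) s / ennreal k \<partial>lborel)"
    proof (rule nn_integral_mono)
      fix s
      have eq: "(\<lambda>x. g x / m) = (\<lambda>x. l0 * g x / k)" unfolding km using l0 by simp
      have "phi_ext \<phi> (rearr M (\<lambda>x. g x / m) s) \<le> phi_ext \<phi> (rearr M (\<lambda>x. l0 * g x) s) / ennreal k"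
        unfolding eq by (rule phi_ext_scale[OF phi k1])
      then have "F s \<le> phi_ext \<phi> (rearr M (\<lambda>x. l0 * g x) s) / ennreal k * ennreal (h s) * indicator (meas_dom M) s"
        unfolding F_def by (intro mult_right_mono) auto
      also have "\<dots> = phi_ext \<phi> (rearr M (\<lambda>x. l0 * g x) s) * ennreal (h s) * indicator (meas_dom M) s / ennreal k"
        unfolding divide_ennreal_def by (simp only: ac_simps)
      finally show "F s \<le> phi_ext \<phi> (rearr M (\<lambda>x. l0 * g x) s) * ennreal (h s) * indicator (meas_dom M) s / ennreal k" .
    qed
    also have "\<dots> = K / ennreal k"
      unfolding K_def OL_mod_def
      by (rule nn_integral_divide) (use modF_borel[OF phi w] in simp)
    finally show ?thesis .
  qed
  then have "ennreal C * integral\<^sup>N lborel F \<le> ennreal C * (K / ennreal k)" by (rule mult_left_mono) simp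
  also have "K / ennreal k = ennreal (Kr / k)" unfolding K(1) using K(2) k1 by (intro divide_ennreal) auto
  also have "ennreal C * ennreal (Kr / k) = ennreal (C * (Kr / k))" using C(1) K(2) k1 by (intro ennreal_mult[symmetric]) auto
  also have "C * (Kr / k) \<le> 1"
  proof -
    have "C * Kr \<le> 1 * k" unfolding k_def by simp
    then have "C * Kr / k \<le> 1" using k1 by (subst pos_divide_le_eq) auto
    then show ?thesis by simp
  qed
  then have "ennreal (C * (Kr / k)) \<le> 1" by simp
  finally show ?thesis using m0 by blast
qed



lemma tp_group:
  assumes bij: "bij_betw \<tau> (space M) (space M)" and x: "x \<in> space M"
  shows "tau_pow M \<tau> k (tau_pow M \<tau> n x) = tau_pow M \<tau> (k + n) x"
proof -
  define X where "X = space M"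
  define \<iota> where "\<iota> = inv_into X \<tau>"
  have inj: "inj_on \<tau> X" and img: "\<tau> ` X = X" using bij unfolding X_def bij_betw_def by auto
  have ti: "\<tau> (\<iota> y) = y" if "y \<in> X" for y unfolding \<iota>_def using that img by (intro f_inv_into_f) auto
  have it: "\<iota> (\<tau> y) = y" if "y \<in> X" for y unfolding \<iota>_def using that inj by (simp add: inv_into_f_f)
  have iX: "\<iota> y \<in> X" if "y \<in> X" for y unfolding \<iota>_def using that img by (metis inv_into_into)
  have tX: "\<tau> y \<in> X" if "y \<in> X" for y using that img by blast
  have tnX: "(\<tau> ^^ a) y \<in> X" if "y \<in> X" for a y using that by (induction a) (auto intro: tX)
  have inX: "(\<iota> ^^ a) y \<in> X" if "y \<in> X" for a y using that by (induction a) (auto intro: iX)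
  have tp: "tau_pow M \<tau> z = (if 0 \<le> z then \<tau> ^^ nat z else \<iota> ^^ nat (- z))" for z
    unfolding tau_pow_def \<iota>_def X_def ..
  have L1: "(\<tau> ^^ a) ((\<iota> ^^ b) y) = tau_pow M \<tau> (int a - int b) y" if "y \<in> X" for a b y
    using that
  proof (induction b arbitrary: a y)
    case 0 then show ?case by (simp add: tp)
  next
    case (Suc b)
    show ?case
    proof (cases a)
      case 0
      have e: "nat (int b + 1) = Suc b" by simp
      show ?thesis using 0 by (simp add: tp e del: funpow.simps)
    next
      case (Suc a')
      have "(\<tau> ^^ a) ((\<iota> ^^ Suc b) y) = (\<tau> ^^ a') (\<tau> (\<iota> ((\<iota> ^^ b) y)))"
        unfolding Suc by (simp only: funpow_Suc_right[where f=\<tau> and n=a'] funpow.simps(2)[where f=\<iota> and n=b] comp_apply)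
      also have "\<dots> = (\<tau> ^^ a') ((\<iota> ^^ b) y)" using ti inX Suc.prems by simp
      also have "\<dots> = tau_pow M \<tau> (int a' - int b) y" using Suc.IH Suc.prems by simp
      finally show ?thesis unfolding Suc by simp
    qed
  qed
  have L2: "(\<iota> ^^ b) ((\<tau> ^^ a) y) = tau_pow M \<tau> (int a - int b) y" if "y \<in> X" for a b y
    using that
  proof (induction a arbitrary: b y)
    case 0 then show ?case by (cases "b = 0") (simp_all add: tp del: funpow.simps)
  next
    case (Suc a)
    show ?case
    proof (cases b)
      case 0
      have e: "nat (1 + int a) = Suc a" by simp
      show ?thesis using 0 by (simp add: tp e del: funpow.simps)
    next
      case (Suc b')
      have "(\<iota> ^^ b) ((\<tau> ^^ Suc a) y) = (\<iota> ^^ b') (\<iota> (\<tau> ((\<tau> ^^ a) y)))"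
        unfolding Suc by (simp only: funpow_Suc_right[where f=\<iota> and n=b'] funpow.simps(2)[where f=\<tau> and n=a] comp_apply)
      also have "\<dots> = (\<iota> ^^ b') ((\<tau> ^^ a) y)" using it tnX Suc.prems by simp
      also have "\<dots> = tau_pow M \<tau> (int a - int b') y" using Suc.IH Suc.prems by simp
      finally show ?thesis unfolding Suc by simp
    qed
  qed
  have xX: "x \<in> X" using x unfolding X_def .
  show ?thesis
  proof (cases "0 \<le> k")
    case k: True
    show ?thesis
    proof (cases "0 \<le> n")
      case True
      then show ?thesis using k by (simp add: tp funpow_add nat_add_distrib)
    next
      case False
      then have "tau_pow M \<tau> k (tau_pow M \<tau> n x) = (\<tau> ^^ nat k) ((\<iota> ^^ nat (-n)) x)" using k by (simp add: tp)
      also have "\<dots> = tau_pow M \<tau> (int (nat k) - int (nat (-n))) x" using L1 xX by blast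
      finally show ?thesis using k False by simp
    qed
  next
    case k: False
    show ?thesis
    proof (cases "0 \<le> n")
      case True
      then have "tau_pow M \<tau> k (tau_pow M \<tau> n x) = (\<iota> ^^ nat (-k)) ((\<tau> ^^ nat n) x)" using k by (simp add: tp)
      also have "\<dots> = tau_pow M \<tau> (int (nat n) - int (nat (-k))) x" using L2 xX by blast
      finally show ?thesis using k True by (simp add: add.commute)
    next
      case False
      have e: "nat (- k - n) = nat (- k) + nat (- n)" using k False by simp
      show ?thesis using k False by (simp add: tp e funpow_add)
    qed
  qed
qed



definition goodmap :: "'a measure \<Rightarrow> ('a \<Rightarrow> 'a) \<Rightarrow> bool" where
  "goodmap M \<sigma> \<longleftrightarrow> \<sigma> \<in> M \<rightarrow>\<^sub>M M \<and> bij_betw \<sigma> (space M) (space M) \<and> (\<forall>A\<in>sets M. \<sigma> ` A \<in> sets M)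
   \<and> (\<exists>C\<ge>1. \<forall>A\<in>sets M. emeasure M (\<sigma> -` A \<inter> space M) \<le> ennreal C * emeasure M A)
   \<and> (\<exists>C\<ge>1. \<forall>A\<in>sets M. emeasure M (\<sigma> ` A) \<le> ennreal C * emeasure M A)"

lemma bound_to_ge1:
  assumes "\<exists>c>0. \<forall>A\<in>sets M. emeasure M (F A) \<le> ennreal c * emeasure M A"
  shows "\<exists>C\<ge>1. \<forall>A\<in>sets M. emeasure M (F A) \<le> ennreal C * emeasure M A"
proof -
  obtain c where c: "\<forall>A\<in>sets M. emeasure M (F A) \<le> ennreal c * emeasure M A" using assms by blast
  have "\<forall>A\<in>sets M. emeasure M (F A) \<le> ennreal (max 1 c) * emeasure M A"
  proof
    fix A assume "A \<in> sets M"
    then have "emeasure M (F A) \<le> ennreal c * emeasure M A" using c by blast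
    also have "\<dots> \<le> ennreal (max 1 c) * emeasure M A" by (intro mult_right_mono ennreal_leI) auto
    finally show "emeasure M (F A) \<le> ennreal (max 1 c) * emeasure M A" .
  qed
  then show ?thesis by (intro exI[of _ "max 1 c"]) auto
qed

lemma good_id: "goodmap M id"
  unfolding goodmap_def
proof (intro conjI)
  show "\<exists>C\<ge>1. \<forall>A\<in>sets M. emeasure M (id -` A \<inter> space M) \<le> ennreal C * emeasure M A"
    by (intro exI[of _ 1]) (auto simp: Int_absorb2 sets.sets_into_space)
  show "\<exists>C\<ge>1. \<forall>A\<in>sets M. emeasure M (id ` A) \<le> ennreal C * emeasure M A"
    by (intro exI[of _ 1]) auto
qed (auto simp: bij_betw_def)

lemma good_comp:
  assumes g1: "goodmap M \<sigma>1" and g2: "goodmap M \<sigma>2"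
  shows "goodmap M (\<sigma>1 \<circ> \<sigma>2)"
proof -
  have m1: "\<sigma>1 \<in> M \<rightarrow>\<^sub>M M" and b1: "bij_betw \<sigma>1 (space M) (space M)" and i1: "\<forall>A\<in>sets M. \<sigma>1 ` A \<in> sets M"
    using g1 unfolding goodmap_def by blast+
  obtain C1 where C1: "C1 \<ge> 1" "\<forall>A\<in>sets M. emeasure M (\<sigma>1 -` A \<inter> space M) \<le> ennreal C1 * emeasure M A"
    using g1 unfolding goodmap_def by blast
  obtain D1 where D1: "D1 \<ge> 1" "\<forall>A\<in>sets M. emeasure M (\<sigma>1 ` A) \<le> ennreal D1 * emeasure M A"
    using g1 unfolding goodmap_def by blast
  have m2: "\<sigma>2 \<in> M \<rightarrow>\<^sub>M M" and b2: "bij_betw \<sigma>2 (space M) (space M)" and i2: "\<forall>A\<in>sets M. \<sigma>2 ` A \<in> sets M"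
    using g2 unfolding goodmap_def by blast+
  obtain C2 where C2: "C2 \<ge> 1" "\<forall>A\<in>sets M. emeasure M (\<sigma>2 -` A \<inter> space M) \<le> ennreal C2 * emeasure M A"
    using g2 unfolding goodmap_def by blast
  obtain D2 where D2: "D2 \<ge> 1" "\<forall>A\<in>sets M. emeasure M (\<sigma>2 ` A) \<le> ennreal D2 * emeasure M A"
    using g2 unfolding goodmap_def by blast
  have pre: "(\<sigma>1 \<circ> \<sigma>2) -` A \<inter> space M = \<sigma>2 -` (\<sigma>1 -` A \<inter> space M) \<inter> space M" for A
    using measurable_space[OF m2] by auto
  have "\<forall>A\<in>sets M. emeasure M ((\<sigma>1 \<circ> \<sigma>2) -` A \<inter> space M) \<le> ennreal (C2 * C1) * emeasure M A"
  proof
    fix A assume A: "A \<in> sets M"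
    have s: "\<sigma>1 -` A \<inter> space M \<in> sets M" using measurable_sets[OF m1 A] .
    have "emeasure M ((\<sigma>1 \<circ> \<sigma>2) -` A \<inter> space M) \<le> ennreal C2 * emeasure M (\<sigma>1 -` A \<inter> space M)"
      unfolding pre using C2(2) s by blast
    also have "\<dots> \<le> ennreal C2 * (ennreal C1 * emeasure M A)" using C1(2) A by (intro mult_left_mono) auto
    also have "\<dots> = ennreal (C2 * C1) * emeasure M A" using C1 C2 by (simp add: ennreal_mult mult.assoc)
    finally show "emeasure M ((\<sigma>1 \<circ> \<sigma>2) -` A \<inter> space M) \<le> ennreal (C2 * C1) * emeasure M A" .
  qed
  moreover have "\<forall>A\<in>sets M. emeasure M ((\<sigma>1 \<circ> \<sigma>2) ` A) \<le> ennreal (D1 * D2) * emeasure M A"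
  proof
    fix A assume A: "A \<in> sets M"
    have "emeasure M ((\<sigma>1 \<circ> \<sigma>2) ` A) = emeasure M (\<sigma>1 ` (\<sigma>2 ` A))" by (simp add: image_comp)
    also have "\<dots> \<le> ennreal D1 * emeasure M (\<sigma>2 ` A)" using D1(2) i2 A by blast
    also have "\<dots> \<le> ennreal D1 * (ennreal D2 * emeasure M A)" using D2(2) A by (intro mult_left_mono) auto
    also have "\<dots> = ennreal (D1 * D2) * emeasure M A" using D1 D2 by (simp add: ennreal_mult mult.assoc)
    finally show "emeasure M ((\<sigma>1 \<circ> \<sigma>2) ` A) \<le> ennreal (D1 * D2) * emeasure M A" .
  qed
  moreover have "\<forall>A\<in>sets M. (\<sigma>1 \<circ> \<sigma>2) ` A \<in> sets M"
  proof
    fix A assume "A \<in> sets M"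
    then have "\<sigma>1 ` (\<sigma>2 ` A) \<in> sets M" using i1 i2 by blast
    moreover have "(\<sigma>1 \<circ> \<sigma>2) ` A = \<sigma>1 ` (\<sigma>2 ` A)" by auto
    ultimately show "(\<sigma>1 \<circ> \<sigma>2) ` A \<in> sets M" by simp
  qed
  moreover have "\<sigma>1 \<circ> \<sigma>2 \<in> M \<rightarrow>\<^sub>M M" by (rule measurable_comp[OF m2 m1])
  moreover have "bij_betw (\<sigma>1 \<circ> \<sigma>2) (space M) (space M)" by (rule bij_betw_trans[OF b2 b1])
  moreover have "1 \<le> C2 * C1" "1 \<le> D1 * D2" using mult_mono[of 1 C2 1 C1] mult_mono[of 1 D1 1 D2] C1(1) C2(1) D1(1) D2(1) by simp_all
  ultimately show ?thesis unfolding goodmap_def by blast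
qed

lemma good_pow: "goodmap M \<sigma> \<Longrightarrow> goodmap M (\<sigma> ^^ n)"
proof (induction n)
  case 0 then show ?case using good_id[of M] by (simp add: id_def)
next
  case (Suc n)
  then have "goodmap M (\<sigma> \<circ> \<sigma> ^^ n)" by (intro good_comp) auto
  then show ?case by (simp only: funpow.simps(2))
qed

lemma good_inv:
  assumes g: "goodmap M \<sigma>"
  shows "goodmap M (inv_into (space M) \<sigma>)"
proof -
  define X where "X = space M"
  define \<iota> where "\<iota> = inv_into X \<sigma>"
  have m: "\<sigma> \<in> M \<rightarrow>\<^sub>M M" and b: "bij_betw \<sigma> X X" and i: "\<forall>A\<in>sets M. \<sigma> ` A \<in> sets M"
    using g unfolding goodmap_def X_def by blast+
  obtain C where C: "C \<ge> 1" "\<forall>A\<in>sets M. emeasure M (\<sigma> -` A \<inter> X) \<le> ennreal C * emeasure M A"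
    using g unfolding goodmap_def X_def by blast
  obtain D where D: "D \<ge> 1" "\<forall>A\<in>sets M. emeasure M (\<sigma> ` A) \<le> ennreal D * emeasure M A"
    using g unfolding goodmap_def by blast
  have inj: "inj_on \<sigma> X" and img: "\<sigma> ` X = X" using b unfolding bij_betw_def by auto
  have si: "\<sigma> (\<iota> y) = y" if "y \<in> X" for y unfolding \<iota>_def using that img by (intro f_inv_into_f) auto
  have is': "\<iota> (\<sigma> y) = y" if "y \<in> X" for y unfolding \<iota>_def using that inj by (simp add: inv_into_f_f)
  have iX: "\<iota> y \<in> X" if "y \<in> X" for y unfolding \<iota>_def using that img by (metis inv_into_into)
  have sX: "\<sigma> y \<in> X" if "y \<in> X" for y using that img by blast
  have pre: "\<iota> -` A \<inter> X = \<sigma> ` A" if "A \<subseteq> X" for A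
  proof (intro equalityI subsetI)
    fix y assume "y \<in> \<iota> -` A \<inter> X"
    then show "y \<in> \<sigma> ` A" using si[of y] by (metis IntE image_eqI vimageE)
  next
    fix y assume "y \<in> \<sigma> ` A"
    then obtain a where "a \<in> A" "y = \<sigma> a" by blast
    then show "y \<in> \<iota> -` A \<inter> X" using is'[of a] sX[of a] that by auto
  qed
  have im: "\<iota> ` A = \<sigma> -` A \<inter> X" if "A \<subseteq> X" for A
  proof (intro equalityI subsetI)
    fix y assume "y \<in> \<iota> ` A"
    then obtain a where "a \<in> A" "y = \<iota> a" by blast
    then show "y \<in> \<sigma> -` A \<inter> X" using si[of a] iX[of a] that by auto
  next
    fix y assume "y \<in> \<sigma> -` A \<inter> X"
    then show "y \<in> \<iota> ` A" using is'[of y] by (metis IntE image_eqI vimageE)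
  qed
  have sub: "A \<subseteq> X" if "A \<in> sets M" for A using that sets.sets_into_space unfolding X_def by blast
  have mi: "\<iota> \<in> M \<rightarrow>\<^sub>M M"
  proof (rule measurableI)
    fix x assume "x \<in> space M" then show "\<iota> x \<in> space M" using iX unfolding X_def by blast
  next
    fix A assume "A \<in> sets M" then show "\<iota> -` A \<inter> space M \<in> sets M"
      using pre[OF sub] i unfolding X_def by simp
  qed
  have bi: "bij_betw \<iota> X X" unfolding \<iota>_def by (rule bij_betw_inv_into[OF b])
  have "\<forall>A\<in>sets M. \<iota> ` A \<in> sets M" using im sub measurable_sets[OF m] unfolding X_def by simp
  moreover have "\<forall>A\<in>sets M. emeasure M (\<iota> -` A \<inter> X) \<le> ennreal D * emeasure M A"
    using pre sub D(2) by simp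
  moreover have "\<forall>A\<in>sets M. emeasure M (\<iota> ` A) \<le> ennreal C * emeasure M A"
    using im sub C(2) by simp
  ultimately show ?thesis using mi bi C(1) D(1) unfolding goodmap_def \<iota>_def X_def by blast
qed

lemma good_tp: "goodmap M \<tau> \<Longrightarrow> goodmap M (tau_pow M \<tau> n)"
  unfolding tau_pow_def by (simp add: good_pow good_inv)

lemma good_pre:
  assumes g: "goodmap M \<sigma>" and A: "A \<in> sets M" "0 < emeasure M A" "emeasure M A < \<infinity>"
  shows "\<sigma> -` A \<inter> space M \<in> sets M" "0 < emeasure M (\<sigma> -` A \<inter> space M)" "emeasure M (\<sigma> -` A \<inter> space M) < \<infinity>"
proof -
  have m: "\<sigma> \<in> M \<rightarrow>\<^sub>M M" and b: "bij_betw \<sigma> (space M) (space M)"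
    using g unfolding goodmap_def by blast+
  obtain C where C: "C \<ge> 1" "\<forall>A\<in>sets M. emeasure M (\<sigma> -` A \<inter> space M) \<le> ennreal C * emeasure M A"
    using g unfolding goodmap_def by blast
  obtain D where D: "D \<ge> 1" "\<forall>A\<in>sets M. emeasure M (\<sigma> ` A) \<le> ennreal D * emeasure M A"
    using g unfolding goodmap_def by blast
  show s: "\<sigma> -` A \<inter> space M \<in> sets M" using measurable_sets[OF m A(1)] .
  have "emeasure M (\<sigma> -` A \<inter> space M) \<le> ennreal C * emeasure M A" using C(2) A(1) by blast
  also have "\<dots> < \<infinity>" using A(3) by (simp add: ennreal_mult_less_top)
  finally show "emeasure M (\<sigma> -` A \<inter> space M) < \<infinity>" .
  have AX: "A \<subseteq> space M" using A(1) sets.sets_into_space by blast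
  have "\<sigma> ` (\<sigma> -` A \<inter> space M) = A"
  proof (intro equalityI subsetI)
    fix x assume "x \<in> \<sigma> ` (\<sigma> -` A \<inter> space M)" then show "x \<in> A" by auto
  next
    fix x assume x: "x \<in> A"
    then have "x \<in> \<sigma> ` space M" using AX b unfolding bij_betw_def by auto
    then obtain y where "y \<in> space M" "x = \<sigma> y" by blast
    then show "x \<in> \<sigma> ` (\<sigma> -` A \<inter> space M)" using x by auto
  qed
  then have "emeasure M A \<le> ennreal D * emeasure M (\<sigma> -` A \<inter> space M)" using D(2) s by metis
  then show "0 < emeasure M (\<sigma> -` A \<inter> space M)" using A(2) by (auto simp: zero_less_iff_neq_zero)
qed

lemma good_distf:
  assumes g: "goodmap M \<sigma>" and gm: "f \<in> borel_measurable M"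
  shows "\<exists>C\<ge>1. \<forall>l. distf M (f \<circ> \<sigma>) l \<le> ennreal C * distf M f l"
proof -
  have m: "\<sigma> \<in> M \<rightarrow>\<^sub>M M" using g unfolding goodmap_def by blast
  obtain C where C: "C \<ge> 1" "\<forall>A\<in>sets M. emeasure M (\<sigma> -` A \<inter> space M) \<le> ennreal C * emeasure M A"
    using g unfolding goodmap_def by blast
  have "distf M (f \<circ> \<sigma>) l \<le> ennreal C * distf M f l" for l
  proof -
    have s: "{x \<in> space M. l < \<bar>f x\<bar>} \<in> sets M" using gm by measurable
    have eq: "{x \<in> space M. l < \<bar>(f \<circ> \<sigma>) x\<bar>} = \<sigma> -` {x \<in> space M. l < \<bar>f x\<bar>} \<inter> space M"
      using measurable_space[OF m] by auto
    show ?thesis unfolding distf_def eq using C(2) s by blast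
  qed
  then show ?thesis using C(1) by blast
qed



lemma Inf_ereal_pos: "Inf (ereal ` {0<..}) = (0::ereal)"
proof (rule antisym)
  show "Inf (ereal ` {0<..}) \<le> 0"
    unfolding Inf_le_iff
  proof (intro allI impI)
    fix y :: ereal assume "0 < y"
    show "\<exists>a\<in>ereal ` {0<..}. a < y"
    proof (cases y)
      case (real r)
      then show ?thesis using \<open>0 < y\<close> by (intro bexI[of _ "ereal (r/2)"]) auto
    next
      case PInf then show ?thesis by (intro bexI[of _ "ereal 1"]) auto
    next
      case MInf then show ?thesis using \<open>0 < y\<close> by simp
    qed
  qed
  show "0 \<le> Inf (ereal ` {0<..})" by (rule Inf_greatest) auto
qed

lemma norm_zero:
  assumes phi: "orlicz_function \<phi>" and z: "\<And>e. 0 < e \<Longrightarrow> distf M g e = 0"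
  shows "OL_norm \<phi> h M g = 0"
proof -
  have "OL_mod \<phi> h M (\<lambda>x. g x / l) = 0" if l: "0 < l" for l
  proof -
    have r: "rearr M (\<lambda>x. g x / l) t = 0" for t
    proof -
      have "{ereal s |s. 0 < s \<and> distf M (\<lambda>x. g x / l) s \<le> ennreal t} = ereal ` {0<..}"
      proof (intro equalityI subsetI)
        fix y assume "y \<in> {ereal s |s. 0 < s \<and> distf M (\<lambda>x. g x / l) s \<le> ennreal t}"
        then show "y \<in> ereal ` {0<..}" by auto
      next
        fix y assume "y \<in> ereal ` {0<..}"
        then obtain s where s: "y = ereal s" "0 < s" by auto
        have sl: "0 < s * l" using s l by simp
        have "distf M (\<lambda>x. g x / l) s = 0" using distf_div[OF l, of M g s] z[OF sl] by simp
        then show "y \<in> {ereal s |s. 0 < s \<and> distf M (\<lambda>x. g x / l) s \<le> ennreal t}" using s by auto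
      qed
      then show ?thesis unfolding rearr_def using Inf_ereal_pos by simp
    qed
    show ?thesis unfolding OL_mod_def r using orl_facts(1)[OF phi] by (simp add: phi_ext_def)
  qed
  then have "{l. 0 < l \<and> OL_mod \<phi> h M (\<lambda>x. g x / l) \<le> 1} = {0<..}" by auto
  then show ?thesis unfolding OL_norm_def by simp
qed

theorem mainTheorem1:
  fixes \<phi> h :: "real \<Rightarrow> real" and M :: "'a measure" and \<tau> :: "'a \<Rightarrow> 'a"
  assumes "orlicz_function \<phi>"
    and "weight M h"
    and "comp_dyn_sys \<phi> h M \<tau>"
    and "bij_betw \<tau> (space M) (space M)"
    and "\<exists>c>0. \<forall>A\<in>sets M. emeasure M (\<tau> ` A) \<le> ennreal c * emeasure M A"
  shows "expansive_comp \<phi> h M \<tau> \<longleftrightarrow>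
    (\<forall>A\<in>sets M. 0 < emeasure M A \<and> emeasure M A < \<infinity> \<longrightarrow>
       (INF n::int. phi_inv \<phi> (enn2real (1 / hint_upto h (emeasure M (tau_pow M \<tau> n -` A \<inter> space M))))) = 0)"
proof -
  note phi = assms(1) and w = assms(2)
  have sf: "sigma_finite_measure M" and tm: "\<tau> \<in> M \<rightarrow>\<^sub>M M" and ti: "\<forall>A\<in>sets M. \<tau> ` A \<in> sets M"
    and tpre: "\<exists>c>0. \<forall>A\<in>sets M. emeasure M (\<tau> -` A \<inter> space M) \<le> ennreal c * emeasure M A"
    using assms(3) unfolding comp_dyn_sys_def by blast+
  have gt: "goodmap M \<tau>" unfolding goodmap_def
    using tm assms(4) ti bound_to_ge1[of M "\<lambda>A. \<tau> -` A \<inter> space M", OF tpre]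
      bound_to_ge1[of M "\<lambda>A. \<tau> ` A", OF assms(5)] by blast
  have gn: "goodmap M (tau_pow M \<tau> n)" for n by (rule good_tp[OF gt])
  define v where "v A n = phi_inv \<phi> (enn2real (1 / hint_upto h (emeasure M (tau_pow M \<tau> n -` A \<inter> space M))))" for A n
  define B where "B A n = tau_pow M \<tau> n -` A \<inter> space M" for A n
  have Bp: "B A n \<in> sets M" "0 < emeasure M (B A n)" "emeasure M (B A n) < \<infinity>"
    if "A \<in> sets M" "0 < emeasure M A" "emeasure M A < \<infinity>" for A n
    unfolding B_def using good_pre[OF gn that] by auto
  have vpos: "0 < v A n" if "A \<in> sets M" "0 < emeasure M A" "emeasure M A < \<infinity>" for A n
    using norm_ind(2)[OF phi w Bp[OF that, of n] zero_less_one] unfolding v_def B_def .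
  have vnorm: "OL_norm \<phi> h M (\<lambda>x. c * indicator (B A n) x) = c / v A n"
    if "A \<in> sets M" "0 < emeasure M A" "emeasure M A < \<infinity>" "0 < c" for A n c
    using norm_ind(1)[OF phi w Bp[OF that(1-3), of n] that(4)] unfolding v_def B_def .
  have bdd: "bdd_below (range (v A))" if "A \<in> sets M" "0 < emeasure M A" "emeasure M A < \<infinity>" for A
    using vpos[OF that] by (intro bdd_belowI[of _ 0]) (auto intro: less_imp_le)
  have BB: "B (B A k) n = B A (k + n)" for A k n
    unfolding B_def using tp_group[OF assms(4)] measurable_space[OF good_tp[OF gt, unfolded goodmap_def, THEN conjunct1]]
    by auto
  show ?thesis
    unfolding v_def[symmetric]
  proof
    assume exp: "expansive_comp \<phi> h M \<tau>"
    show "\<forall>A\<in>sets M. 0 < emeasure M A \<and> emeasure M A < \<infinity> \<longrightarrow> (INF n. v A n) = 0"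
    proof (intro ballI impI)
      fix A assume A: "A \<in> sets M" "0 < emeasure M A \<and> emeasure M A < \<infinity>"
      then have A': "A \<in> sets M" "0 < emeasure M A" "emeasure M A < \<infinity>" by auto
      have ge: "0 \<le> (INF n. v A n)" using vpos[OF A'] by (intro cINF_greatest) (auto intro: less_imp_le)
      show "(INF n. v A n) = 0"
      proof (rule ccontr)
        assume "(INF n. v A n) \<noteq> 0"
        then have c0: "0 < (INF n. v A n)" using ge by simp
        define c where "c = (INF n. v A n)"
        have "(INF n. v A n) < 2 * c" using c0 unfolding c_def by simp
        then obtain k where k: "v A k < 2 * c" using cINF_less_iff[OF _ bdd[OF A']] by auto
        have cle: "c \<le> v A n" for n unfolding c_def by (rule cINF_lower[OF bdd[OF A']]) simp
        define g where "g x = v A k * indicator (B A k) x" for x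
        have vk: "0 < v A k" by (rule vpos[OF A'])
        have Bk: "B A k \<in> sets M" "0 < emeasure M (B A k)" "emeasure M (B A k) < \<infinity>" using Bp[OF A'] by auto
        have gsp: "g \<in> OL_space \<phi> h M"
          unfolding OL_space_def
        proof (intro CollectI conjI exI[of _ 1])
          show "g \<in> borel_measurable M" unfolding g_def using Bk(1) by measurable
          have "OL_mod \<phi> h M (\<lambda>x. 1 * g x) = ennreal (\<phi> (v A k)) * hint_upto h (emeasure M (B A k))"
            unfolding g_def using mod_ind[OF phi w Bk(1) vk] by simp
          also have "\<dots> < \<infinity>" using H_bounds(2)[OF w Bk] by (simp add: ennreal_mult_less_top)
          finally show "OL_mod \<phi> h M (\<lambda>x. 1 * g x) < \<infinity>" .
        qed simp
        have gn1: "OL_norm \<phi> h M g = 1" unfolding g_def using vnorm[OF A' vk, of k] vk by simp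
        obtain n where n: "2 \<le> OL_norm \<phi> h M (g \<circ> tau_pow M \<tau> n)"
          using exp gsp gn1 unfolding expansive_comp_def by blast
        have "OL_norm \<phi> h M (g \<circ> tau_pow M \<tau> n) = OL_norm \<phi> h M (\<lambda>x. v A k * indicator (B (B A k) n) x)"
          by (rule norm_congr) (simp add: g_def B_def indicator_def)
        also have "\<dots> = v A k / v A (k + n)" unfolding BB using vnorm[OF A' vk] by simp
        also have "\<dots> < 2"
        proof -
          have p: "0 < v A (k + n)" by (rule vpos[OF A'])
          have "v A k < 2 * v A (k + n)" using k cle[of "k + n"] by linarith
          then show ?thesis using p by (simp add: pos_divide_less_eq)
        qed
        finally show False using n by simp
      qed
    qed
  next
    assume R: "\<forall>A\<in>sets M. 0 < emeasure M A \<and> emeasure M A < \<infinity> \<longrightarrow> (INF n. v A n) = 0"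
    show "expansive_comp \<phi> h M \<tau>"
      unfolding expansive_comp_def
    proof (intro ballI impI)
      fix g assume gs: "g \<in> OL_space \<phi> h M" and g1: "OL_norm \<phi> h M g = 1"
      have gm: "g \<in> borel_measurable M" using gs unfolding OL_space_def by blast
      obtain l0 where l0: "0 < l0" "OL_mod \<phi> h M (\<lambda>x. l0 * g x) < \<infinity>" using gs unfolding OL_space_def by blast
      obtain e where e: "0 < e" "distf M g e \<noteq> 0"
        using norm_zero[OF phi, of M g h] g1 by force
      define A0 where "A0 = {x \<in> space M. e < \<bar>g x\<bar>}"
      have A0s: "A0 \<in> sets M" unfolding A0_def using gm by measurable
      have A0p: "emeasure M A0 \<noteq> 0" using e unfolding A0_def distf_def by simp
      obtain Q :: "nat \<Rightarrow> 'a set" where Q: "range Q \<subseteq> sets M" "(\<Union>i. Q i) = space M" "\<And>i. emeasure M (Q i) \<noteq> \<infinity>"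
        using sigma_finite_measure.sigma_finite[OF sf] by metis
      have "\<exists>i. emeasure M (A0 \<inter> Q i) \<noteq> 0"
      proof (rule ccontr)
        assume "\<not> (\<exists>i. emeasure M (A0 \<inter> Q i) \<noteq> 0)"
        then have "emeasure M (\<Union>i. A0 \<inter> Q i) = 0"
          using Q(1) A0s by (intro emeasure_UN_eq_0) auto
        moreover have "(\<Union>i. A0 \<inter> Q i) = A0" using Q(2) A0s sets.sets_into_space by blast
        ultimately show False using A0p by simp
      qed
      then obtain i where i: "emeasure M (A0 \<inter> Q i) \<noteq> 0" by blast
      define A where "A = A0 \<inter> Q i"
      have As: "A \<in> sets M" unfolding A_def using A0s Q(1) by auto
      have Ap: "0 < emeasure M A" using i unfolding A_def by (simp add: zero_less_iff_neq_zero)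
      have Af: "emeasure M A < \<infinity>"
      proof -
        have "emeasure M A \<le> emeasure M (Q i)" unfolding A_def using Q(1) by (intro emeasure_mono) auto
        then show ?thesis using Q(3)[of i] by (simp add: less_top order_le_less_trans)
      qed
      have il: "(INF n. v A n) < e / 2" using R As Ap Af e(1) by simp
      have "\<exists>x\<in>UNIV. v A x < e / 2"
        using cINF_less_iff[of UNIV "v A" "e/2", OF UNIV_not_empty bdd[OF As Ap Af]] il by blast
      then obtain n where n: "v A n < e / 2" by blast
      have vp: "0 < v A n" by (rule vpos[OF As Ap Af])
      define f where "f = g \<circ> tau_pow M \<tau> n"
      have fm: "f \<in> borel_measurable M" unfolding f_def
        using measurable_comp[OF good_tp[OF gt, unfolded goodmap_def, THEN conjunct1] gm] .
      obtain C where C: "C \<ge> 1" "\<forall>l. distf M f l \<le> ennreal C * distf M g l"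
        using good_distf[OF gn gm] unfolding f_def by blast
      have ne: "\<exists>l>0. OL_mod \<phi> h M (\<lambda>x. f x / l) \<le> 1"
        by (rule S_nonempty[OF phi w C(1) _ l0]) (use C(2) in blast)
      have le: "\<bar>e * indicator (B A n) x\<bar> \<le> \<bar>f x\<bar>" if "x \<in> space M" for x
      proof (cases "x \<in> B A n")
        case True
        then have "tau_pow M \<tau> n x \<in> A0" unfolding B_def A_def by simp
        then have "e < \<bar>f x\<bar>" unfolding A0_def f_def by simp
        then show ?thesis using True e(1) by simp
      qed simp
      have "e / v A n = OL_norm \<phi> h M (\<lambda>x. e * indicator (B A n) x)"
        using vnorm[OF As Ap Af e(1)] by simp
      also have "\<dots> \<le> OL_norm \<phi> h M f" by (rule norm_mono[OF phi fm le ne])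
      finally have "e / v A n \<le> OL_norm \<phi> h M f" .
      moreover have "2 \<le> e / v A n" using n vp by (simp add: pos_le_divide_eq)
      ultimately show "\<exists>n. 2 \<le> OL_norm \<phi> h M (g \<circ> tau_pow M \<tau> n)" unfolding f_def by (intro exI[of _ n]) simp
    qed
  qed
qed

end
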